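(* For every $n>0$ and every set $U$ with $\mathbb R^n_{\mathrm{rect}}\subseteq U\subseteq\mathbb R^n_{\mathrm{reg}}$, the region structure $\mathfrak R(\mathbb R^n,U)$ is domino ready.
   Context: $\mathbb R^n$ has the Euclidean topology with interior $\mathbb I$; $\mathbb R^n_{\mathrm{reg}}$ is the set of non-empty regular closed subsets ($\mathbb C\mathbb I(s)=s$); $\mathbb R^n_{\mathrm{rect}}$ the set of products $\prod_{i=1}^nC_i$ of non-singleton closed intervals. $\mathfrak R(\mathbb R^n,U)$ has domain $U$ and relations $\mathrm{tpp}(s,t)$ iff $s\subseteq t$, $s\not\subseteq\mathbb I(t)$, $s\ne t$, and $\mathrm{ntpp}(s,t)$ iff $s\subseteq\mathbb I(t)$, $s\ne t$ (plus the other RCC8 relations). Let $\lambda$ be the enumeration of $\mathbb N\times\mathbb N$ along anti-diagonals from floor to wall: $\lambda(k(k+1)/2+m+1)=(k-m,m)$ for $k\ge0$, $0\le m\le k$ (so $\lambda(1)=(0,0)$, $\lambda(2)=(1,0)$, $\lambda(3)=(0,1)$, $\lambda(4)=(2,0)$, ...). A region structure with domain $W$ is domino ready if $W$ contains sequences $x_1,x_2,\dots$ and $y_1,y_2,\dots$ such that for all $i,j\ge1$: (1) $x_i\,\mathrm{tpp}\,x_{i+1}$; (2) $x_i\,\mathrm{ntpp}\,x_j$ if $j>i+1$; (3) $x_{2i-1}\,\mathrm{tpp}\,y_i$; (4) $y_i\,\mathrm{tpp}\,x_{2j-1}$ iff $\lambda(j)$ is reached from $\lambda(i)$ by one step to the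 right (first coordinate $+1$); (5) $y_i\,\mathrm{ntpp}\,y_j$ if $j>i$. *)

theory Defs
  imports "HOL-Analysis.Analysis"
begin

definition reg_sets :: "(real^'n) set set" where
  "reg_sets = {s. s \<noteq> {} \<and> closure (interior s) = s}"

definition closed_interval_ns :: "real set \<Rightarrow> bool" where
  "closed_interval_ns C \<longleftrightarrow> closed C \<and> is_interval C \<and> (\<exists>a\<in>C. \<exists>b\<in>C. a \<noteq> b)"

definition rect_sets :: "(real^'n) set set" where
  "rect_sets = {{x. \<forall>i. x $ i \<in> C i} | C. \<forall>i. closed_interval_ns (C i)}"

definition tpp :: "(real^'n) set \<Rightarrow> (real^'n) set \<Rightarrow> bool" where
  "tpp s t \<longleftrightarrow> s \<subseteq> t \<and> \<not> s \<subseteq> interior t \<and> s \<noteq> t"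

definition ntpp :: "(real^'n) set \<Rightarrow> (real^'n) set \<Rightarrow> bool" where
  "ntpp s t \<longleftrightarrow> s \<subseteq> interior t \<and> s \<noteq> t"

text \<open>The enumeration lambda of N x N along anti-diagonals (indices from 1).\<close>
definition lam :: "nat \<Rightarrow> nat \<times> nat" where
  "lam j = (THE p. \<exists>k m. m \<le> k \<and> j = k * (k + 1) div 2 + m + 1 \<and> p = (k - m, m))"

definition domino_ready :: "'a set \<Rightarrow> ('a \<Rightarrow> 'a \<Rightarrow> bool) \<Rightarrow> ('a \<Rightarrow> 'a \<Rightarrow> bool) \<Rightarrow> bool" where
  "domino_ready W tp ntp \<longleftrightarrow>
    (\<exists>x y :: nat \<Rightarrow> 'a.
       (\<forall>i\<ge>1. x i \<in> W \<and> y i \<in> W) \<and>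
       (\<forall>i\<ge>1. tp (x i) (x (i + 1))) \<and>
       (\<forall>i\<ge>1. \<forall>j. j > i + 1 \<longrightarrow> ntp (x i) (x j)) \<and>
       (\<forall>i\<ge>1. tp (x (2 * i - 1)) (y i)) \<and>
       (\<forall>i\<ge>1. \<forall>j\<ge>1. tp (y i) (x (2 * j - 1)) \<longleftrightarrow>
                        lam j = (fst (lam i) + 1, snd (lam i))) \<and>
       (\<forall>i\<ge>1. \<forall>j. j > i \<longrightarrow> ntp (y i) (y j)))"

end

theory Submission
  imports Defs
begin

definition T :: "nat \<Rightarrow> nat" where "T k = k * (k + 1) div 2"

lemma T_Suc: "T (Suc k) = T k + k + 1"
  unfolding T_def by (induct k) auto

lemma T_mono: "k \<le> k' \<Longrightarrow> T k \<le> T k'"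
  unfolding T_def by (intro div_le_mono mult_le_mono) auto

lemma T_uniq:
  assumes "m \<le> k" "m' \<le> k'" "T k + m = T k' + m'"
  shows "k = k' \<and> m = m'"
proof -
  have "\<not> k < k'"
  proof
    assume "k < k'"
    then have "T (Suc k) \<le> T k'" by (intro T_mono) auto
    then show False using assms T_Suc[of k] by simp
  qed
  moreover have "\<not> k' < k"
  proof
    assume "k' < k"
    then have "T (Suc k') \<le> T k" by (intro T_mono) auto
    then show False using assms T_Suc[of k'] by simp
  qed
  ultimately show ?thesis using assms by simp
qed

lemma lam_eq: "m \<le> k \<Longrightarrow> lam (T k + m + 1) = (k - m, m)"
  unfolding lam_def
proof (rule the_equality)
  assume "m \<le> k"
  then show "\<exists>k' m'. m' \<le> k' \<and> T k + m + 1 = k' * (k' + 1) div 2 + m' + 1 \<and> (k - m, m) = (k' - m', m')"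
    unfolding T_def by blast
next
  fix p assume "m \<le> k" and "\<exists>k' m'. m' \<le> k' \<and> T k + m + 1 = k' * (k' + 1) div 2 + m' + 1 \<and> p = (k' - m', m')"
  then obtain k' m' where "m' \<le> k'" "T k + m = T k' + m'" "p = (k' - m', m')"
    unfolding T_def by auto
  with T_uniq[OF \<open>m \<le> k\<close> this(1,2)] show "p = (k - m, m)" by simp
qed

lemma lam_surj: "j \<ge> 1 \<Longrightarrow> \<exists>k m. m \<le> k \<and> j = T k + m + 1"
proof (induct j)
  case 0 then show ?case by simp
next
  case (Suc j)
  show ?case
  proof (cases "j = 0")
    case True then show ?thesis by (intro exI[of _ 0]) (simp add: T_def)
  next
    case False
    then obtain k m where km: "m \<le> k" "j = T k + m + 1" using Suc by auto
    show ?thesis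
    proof (cases "m < k")
      case True then show ?thesis using km by (intro exI[of _ k] exI[of _ "Suc m"]) simp
    next
      case False then show ?thesis using km T_Suc[of k]
        by (intro exI[of _ "Suc k"] exI[of _ 0]) simp
    qed
  qed
qed

lemma lam_char: "j \<ge> 1 \<Longrightarrow> j = T (fst (lam j) + snd (lam j)) + snd (lam j) + 1"
proof -
  assume "j \<ge> 1"
  then obtain k m where "m \<le> k" "j = T k + m + 1" using lam_surj by blast
  then show ?thesis using lam_eq[of m k] by simp
qed

definition g :: "nat \<Rightarrow> nat" where "g i = i + fst (lam i) + snd (lam i) + 1"

lemma g_gt: "i < g i" unfolding g_def by simp

lemma g_lam: "i \<ge> 1 \<Longrightarrow> j \<ge> 1 \<Longrightarrow> (lam j = (fst (lam i) + 1, snd (lam i))) \<longleftrightarrow> j = g i"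
proof -
  assume i: "i \<ge> 1" and j: "j \<ge> 1"
  define a where "a = fst (lam i)"
  define b where "b = snd (lam i)"
  have ic: "i = T (a + b) + b + 1" using lam_char[OF i] a_def b_def by simp
  have gi: "g i = T (Suc (a + b)) + b + 1" unfolding g_def using ic T_Suc[of "a+b"] a_def b_def by simp
  have lg: "lam (g i) = (Suc a, b)" using gi lam_eq[of b "Suc (a+b)"] by simp
  show ?thesis
  proof
    assume "lam j = (fst (lam i) + 1, snd (lam i))"
    then have "lam j = (Suc a, b)" using a_def b_def by simp
    then show "j = g i" using lam_char[OF j] gi by simp
  next
    assume "j = g i" then show "lam j = (fst (lam i) + 1, snd (lam i))" using lg a_def b_def by simp
  qed
qed

lemma g_mono: "1 \<le> i \<Longrightarrow> i < i' \<Longrightarrow> g i < g i'"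
proof -
  assume i: "1 \<le> i" and ii: "i < i'"
  define k where "k = fst (lam i) + snd (lam i)"
  define k' where "k' = fst (lam i') + snd (lam i')"
  have ic: "i = T k + snd (lam i) + 1" using lam_char[OF i] k_def by simp
  have ic': "i' = T k' + snd (lam i') + 1" using lam_char[of i'] i ii k'_def by simp
  have "k \<le> k'"
  proof (rule ccontr)
    assume "\<not> k \<le> k'"
    then have "T (Suc k') \<le> T k" by (intro T_mono) auto
    moreover have "snd (lam i') \<le> k'" using k'_def by simp
    ultimately show False using ic ic' ii T_Suc[of k'] by simp
  qed
  then show ?thesis unfolding g_def using ii k_def k'_def by simp
qed

definition R :: "'n \<Rightarrow> real \<Rightarrow> real \<Rightarrow> (real^'n) set" where
  "R k a b = {x. a \<le> x $ k \<and> x $ k \<le> b}"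

lemma R_int: "interior (R k a b) = {x. a < x $ k \<and> x $ k < b}"
proof -
  have "R k a b = {x. x $ k \<ge> a} \<inter> {x. x $ k \<le> b}" unfolding R_def by auto
  then show ?thesis by (simp add: interior_Int) blast
qed

lemma coord_sub: "({x::real^'n. P (x $ k)} \<subseteq> {x. Q (x $ k)}) \<longleftrightarrow> (\<forall>r. P r \<longrightarrow> Q r)"
proof
  assume h: "{x::real^'n. P (x $ k)} \<subseteq> {x. Q (x $ k)}"
  show "\<forall>r. P r \<longrightarrow> Q r"
  proof (intro allI impI)
    fix r assume "P r"
    then have "(\<chi> i. r) \<in> {x::real^'n. P (x $ k)}" by simp
    then have "Q ((\<chi> i. r) $ k)" using h by blast
    then show "Q r" by simp
  qed
qed auto

lemma R_sub: "a < b \<Longrightarrow> R k a b \<subseteq> R k c d \<longleftrightarrow> c \<le> a \<and> b \<le> d"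
proof -
  assume ab: "a < b"
  have "R k a b \<subseteq> R k c d \<longleftrightarrow> (\<forall>r. a \<le> r \<and> r \<le> b \<longrightarrow> c \<le> r \<and> r \<le> d)"
    unfolding R_def by (rule coord_sub)
  also have "\<dots> \<longleftrightarrow> c \<le> a \<and> b \<le> d"
  proof
    assume h: "\<forall>r. a \<le> r \<and> r \<le> b \<longrightarrow> c \<le> r \<and> r \<le> d"
    show "c \<le> a \<and> b \<le> d" using h[rule_format, of a] h[rule_format, of b] ab by simp
  qed auto
  finally show ?thesis .
qed

lemma R_subi: "a < b \<Longrightarrow> R k a b \<subseteq> interior (R k c d) \<longleftrightarrow> c < a \<and> b < d"
proof -
  assume ab: "a < b"
  have "R k a b \<subseteq> interior (R k c d) \<longleftrightarrow> (\<forall>r. a \<le> r \<and> r \<le> b \<longrightarrow> c < r \<and> r < d)"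
    unfolding R_int unfolding R_def by (rule coord_sub)
  also have "\<dots> \<longleftrightarrow> c < a \<and> b < d"
  proof
    assume h: "\<forall>r. a \<le> r \<and> r \<le> b \<longrightarrow> c < r \<and> r < d"
    show "c < a \<and> b < d" using h[rule_format, of a] h[rule_format, of b] ab by simp
  qed auto
  finally show ?thesis .
qed

lemma R_eq: "a < b \<Longrightarrow> R k a b = R k c d \<longleftrightarrow> a = c \<and> b = d"
proof -
  assume ab: "a < b"
  show ?thesis
  proof
    assume e: "R k a b = R k c d"
    then have "c \<le> a \<and> b \<le> d" using R_sub[OF ab, of k c d] by simp
    then have "c < d" using ab by simp
    then show "a = c \<and> b = d" using R_sub[OF \<open>c < d\<close>, of k a b] e R_sub[OF ab, of k c d] by auto
  qed simp
qed

lemma R_tpp: "a < b \<Longrightarrow> tpp (R k a b) (R k c d) \<longleftrightarrow> c \<le> a \<and> b \<le> d \<and> (a = c \<or> b = d) \<and> (a \<noteq> c \<or> b \<noteq> d)"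
  unfolding tpp_def using R_sub[of a b k c d] R_subi[of a b k c d] R_eq[of a b k c d] by auto

lemma R_ntpp: "a < b \<Longrightarrow> ntpp (R k a b) (R k c d) \<longleftrightarrow> c < a \<and> b < d"
  unfolding ntpp_def using R_subi[of a b k c d] R_eq[of a b k c d] by auto

lemma R_rect: "a < b \<Longrightarrow> R k a b \<in> rect_sets"
proof -
  assume ab: "a < b"
  define C where "C = (\<lambda>i. if i = k then {a..b} else (UNIV :: real set))"
  have "\<forall>i. closed_interval_ns (C i)"
  proof
    fix i show "closed_interval_ns (C i)"
    proof (cases "i = k")
      case True
      have "a \<in> {a..b}" "b \<in> {a..b}" "a \<noteq> b" using ab by auto
      then have "\<exists>u\<in>{a..b}. \<exists>v\<in>{a..b}. u \<noteq> v" by blast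
      then show ?thesis using True unfolding C_def closed_interval_ns_def by (simp add: is_interval_cc)
    next
      case False
      have "(0::real) \<noteq> 1" by simp
      then show ?thesis using False unfolding C_def closed_interval_ns_def by auto
    qed
  qed
  moreover have "R k a b = {x. \<forall>i. x $ i \<in> C i}" unfolding R_def C_def by auto
  ultimately show ?thesis unfolding rect_sets_def by blast
qed

theorem lemma5p8:
  fixes U :: "(real^'n) set set"
  assumes "rect_sets \<subseteq> U" and "U \<subseteq> reg_sets"
  shows "domino_ready U tpp ntpp"
proof -
  obtain k :: 'n where True by simp
  define xa :: "nat \<Rightarrow> real" where "xa n = - real ((n + 1) div 2)" for n
  define xb :: "nat \<Rightarrow> real" where "xb n = real (n div 2 + 1)" for n
  define x where "x n = R k (xa n) (xb n)" for n
  define y where "y i = R k (- real i) (real (g i))" for i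
  have xab: "xa n < xb n" for n unfolding xa_def xb_def by simp
  have yab: "- real i < real (g i)" for i using g_gt[of i] by simp
  have x2: "x (2 * i - 1) = R k (- real i) (real i)" if "i \<ge> 1" for i
  proof -
    have "(2 * i - 1 + 1) div 2 = i" "(2 * i - 1) div 2 + 1 = i" using that by auto
    then show ?thesis unfolding x_def xa_def xb_def by simp
  qed
  show ?thesis
    unfolding domino_ready_def
  proof (rule exI[of _ x], rule exI[of _ y], intro conjI allI impI)
    fix i :: nat assume "1 \<le> i"
    show "x i \<in> U" unfolding x_def using R_rect[OF xab] assms(1) by blast
  next
    fix i :: nat assume "1 \<le> i"
    show "y i \<in> U" unfolding y_def using R_rect[OF yab[of i], of k] assms(1) by blast
  next
    fix i :: nat assume "1 \<le> i"
    show "tpp (x i) (x (i + 1))" unfolding x_def R_tpp[OF xab] unfolding xa_def xb_def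
      by (cases "even i") (auto elim!: evenE oddE)
  next
    fix i j :: nat assume "1 \<le> i" "i + 1 < j"
    then have "(i + 1) div 2 < (j + 1) div 2" "i div 2 < j div 2" by presburger+
    then show "ntpp (x i) (x j)" unfolding x_def R_ntpp[OF xab] unfolding xa_def xb_def by simp
  next
    fix i :: nat assume i: "1 \<le> i"
    show "tpp (x (2 * i - 1)) (y i)" unfolding x2[OF i] y_def using g_gt[of i] i
      by (subst R_tpp) auto
  next
    fix i j :: nat assume i: "1 \<le> i" and j: "1 \<le> j"
    have "tpp (y i) (x (2 * j - 1)) \<longleftrightarrow> j = g i"
      unfolding x2[OF j] y_def R_tpp[OF yab] using g_gt[of i] by auto
    then show "tpp (y i) (x (2 * j - 1)) \<longleftrightarrow> lam j = (fst (lam i) + 1, snd (lam i))"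
      using g_lam[OF i j] by simp
  next
    fix i j :: nat assume i: "1 \<le> i" and "i < j"
    then show "ntpp (y i) (y j)" unfolding y_def R_ntpp[OF yab] using g_mono[OF i] by simp
  qed
qed

end
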